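(* A code $C\subseteq\mathbb{F}_q^n$ is degenerated if and only if $C^\perp$ is degenerated.
   Context: Codes are $\mathbb{F}_q$-linear subspaces of $\mathbb{F}_q^n$; $C^\perp$ is the dual with respect to $\langle\mathbf{u},\mathbf{v}\rangle=\sum_iu_iv_i$. The stabiliser of a code $H$ is $\mathrm{Stab}(H)=\{\mathbf{x}\in\mathbb{F}_q^n:\mathbf{x}*H\subseteq H\}$, where $*$ is the componentwise product. A code $H$ is degenerated if $\dim\mathrm{Stab}(H)>1$; equivalently (a known result), $H$ is a direct sum of nonzero subcodes with disjoint supports or every generator matrix of $H$ has a zero column. *)

theory Defs
  imports "HOL-Analysis.Analysis"
begin

text \<open>Codes over a finite field 'a = F_q of length n = CARD('n): linear subspaces of 'a^'n.\<close>

definition is_code :: "('a::{field,finite} ^ 'n) set \<Rightarrow> bool" where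
  "is_code C \<longleftrightarrow> vec.subspace C"

definition std_inner :: "'a::field ^ 'n \<Rightarrow> 'a ^ 'n \<Rightarrow> 'a" where
  "std_inner u v = (\<Sum>i\<in>UNIV. u $ i * v $ i)"

definition dual_code :: "('a::field ^ 'n) set \<Rightarrow> ('a ^ 'n) set" where
  "dual_code C = {u. \<forall>v\<in>C. std_inner u v = 0}"

definition cw_prod :: "'a::field ^ 'n \<Rightarrow> 'a ^ 'n \<Rightarrow> 'a ^ 'n" where
  "cw_prod x y = (\<chi> i. x $ i * y $ i)"

definition stab :: "('a::field ^ 'n) set \<Rightarrow> ('a ^ 'n) set" where
  "stab H = {x. \<forall>h\<in>H. cw_prod x h \<in> H}"

definition degenerated :: "('a::field ^ 'n) set \<Rightarrow> bool" where
  "degenerated H \<longleftrightarrow> vec.dim (stab H) > 1"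

end

theory Submission
  imports Defs
begin

lemma std_inner_comm: "std_inner u v = std_inner v u"
  unfolding std_inner_def by (simp add: mult.commute)

lemma stab_dual_sub: "stab C \<subseteq> stab (dual_code C)"
proof
  fix x assume x: "x \<in> stab C"
  show "x \<in> stab (dual_code C)"
    unfolding stab_def dual_code_def
  proof (intro CollectI ballI)
    fix h v assume h: "h \<in> {u. \<forall>v\<in>C. std_inner u v = 0}" and v: "v \<in> C"
    have "cw_prod x v \<in> C" using x v unfolding stab_def by auto
    then have "std_inner h (cw_prod x v) = 0" using h by auto
    moreover have "std_inner (cw_prod x h) v = std_inner h (cw_prod x v)"
      unfolding std_inner_def cw_prod_def by (simp add: mult_ac)
    ultimately show "std_inner (cw_prod x h) v = 0" by simp
  qed
qed

lemma dd_sub: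
  fixes C :: "('a::field ^ 'n) set"
  assumes "vec.subspace C"
  shows "dual_code (dual_code C) \<subseteq> C"
proof
  fix w assume w: "w \<in> dual_code (dual_code C)"
  show "w \<in> C"
  proof (rule ccontr)
    assume wC: "w \<notin> C"
    obtain B where B: "B \<subseteq> C" "vec.independent B" "C \<subseteq> vec.span B" "card B = vec.dim C"
      by (rule vec.basis_exists[of C])
    have "vec.span B \<subseteq> C"
      by (rule vec.span_minimal[OF B(1) assms])
    then have spanB: "vec.span B = C"
      using B(3) by (rule antisym)
    have ind: "vec.independent (insert w B)"
      using vec.independent_insertI[of w B] wC spanB B(2) by simp
    define k :: 'n where "k = undefined"
    obtain g where g: "Vector_Spaces.linear (*s) (*s) g"
      "\<forall>x\<in>insert w B. g x = (if x = w then (axis k 1 :: 'a^'n) else 0)"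
      using vec.linear_independent_extend[OF ind, where f="\<lambda>x. if x = w then (axis k 1 :: 'a^'n) else 0"] by blast
    define u where "u = (\<chi> j. matrix g $ k $ j)"
    have ui: "std_inner u v = g v $ k" for v
    proof -
      have "g v = matrix g *v v" by (rule matrix_works[OF g(1), symmetric])
      then show ?thesis
        by (simp add: std_inner_def u_def matrix_vector_mult_def)
    qed
    have g0: "g v = 0" if "v \<in> C" for v
    proof -
      have h: "g x = 0" if "x \<in> B" for x
      proof -
        have "x \<noteq> w" using that B(1) wC by blast
        then show ?thesis using g(2) that by simp
      qed
      have "v \<in> vec.span B" using that spanB by simp
      then show ?thesis using vec.linear_eq_0_on_span[OF g(1), of B v] h by blast
    qed
    have "u \<in> dual_code C"
      unfolding dual_code_def using ui g0 by auto
    then have "std_inner w u = 0" using w unfolding dual_code_def by auto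
    moreover have "std_inner w u = 1"
    proof -
      have "g w = axis k 1" using g(2) by simp
      then show ?thesis using ui[of w] std_inner_comm[of w u] by (simp add: axis_def)
    qed
    ultimately show False by simp
  qed
qed

theorem lemma6p6:
  fixes C :: "('a::{field,finite} ^ 'n) set"
  assumes "is_code C"
  shows "degenerated C \<longleftrightarrow> degenerated (dual_code C)"
proof -
  have sub: "vec.subspace C" using assms unfolding is_code_def .
  have "C \<subseteq> dual_code (dual_code C)"
  proof
    fix c assume c: "c \<in> C"
    have "std_inner c v = 0" if "v \<in> dual_code C" for v
    proof -
      have "std_inner v c = 0" using that c unfolding dual_code_def by blast
      then show ?thesis by (simp add: std_inner_comm)
    qed
    then show "c \<in> dual_code (dual_code C)"
      unfolding dual_code_def by blast
  qed
  then have eq: "dual_code (dual_code C) = C" using dd_sub[OF sub] by (rule antisym[rotated])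
  have "stab (dual_code C) \<subseteq> stab C"
    using stab_dual_sub[of "dual_code C"] unfolding eq .
  then have "stab C = stab (dual_code C)"
    using stab_dual_sub[of C] by (rule antisym[rotated])
  then show ?thesis unfolding degenerated_def by simp
qed

end
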